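(* Let $T$ be an invertible conservative nonsingular transformation of $(X,\mathcal B,\mu)$. Then the Maharam transformation $T^*$ on $(X\times\mathbb R^+,\mu\times\lambda)$ is not rank-one.
   Context: $(X,\mathcal B,\mu)$ is a standard Borel space with nonatomic $\sigma$-finite measure, $\lambda$ is Lebesgue measure on $\mathbb R^+=(0,\infty)$. For invertible nonsingular $T$, let $\omega=\frac{d\mu\circ T}{d\mu}$; the Maharam transformation is $T^*(x,y)=(Tx,\,y/\omega(x))$, which preserves $\mu\times\lambda$. An invertible measure-preserving transformation $R$ of a $\sigma$-finite space is rank-one if there is a sequence of Rokhlin columns $C_n=\{B_n,RB_n,\dots,R^{h_n-1}B_n\}$ (pairwise disjoint sets) such that for every measurable $A$ of finite measure and $\varepsilon>0$ there is $N$ such that for all $n\ge N$ some union $B_n'$ of levels of $C_n$ satisfies $\mu(A\triangle B_n')<\varepsilon$ (rank-one transformations are in particular conservative ergodic). *)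

theory Defs
  imports "HOL-Analysis.Analysis"
begin

text \<open>Standard Borel space: Borel isomorphic to a Borel subset of the reals
  (Kuratowski: every standard Borel space is of this form).\<close>
definition standard_borel :: "'a measure \<Rightarrow> bool" where
  "standard_borel M \<longleftrightarrow>
     (\<exists>(S::real set) f g. S \<in> sets borel \<and>
        f \<in> measurable M (restrict_space borel S) \<and>
        g \<in> measurable (restrict_space borel S) M \<and>
        (\<forall>x\<in>space M. f x \<in> S \<and> g (f x) = x) \<and>
        (\<forall>y\<in>S. g y \<in> space M \<and> f (g y) = y))"

definition nonatomic :: "'a measure \<Rightarrow> bool" where
  "nonatomic M \<longleftrightarrow>
     (\<forall>A\<in>sets M. 0 < emeasure M A \<longrightarrow>
        (\<exists>B\<in>sets M. B \<subseteq> A \<and> 0 < emeasure M B \<and> emeasure M B < emeasure M A))"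

definition invertible_transf :: "'a measure \<Rightarrow> ('a \<Rightarrow> 'a) \<Rightarrow> bool" where
  "invertible_transf M T \<longleftrightarrow>
     bij_betw T (space M) (space M) \<and> T \<in> measurable M M \<and>
     the_inv_into (space M) T \<in> measurable M M"

definition nonsingular_transf :: "'a measure \<Rightarrow> ('a \<Rightarrow> 'a) \<Rightarrow> bool" where
  "nonsingular_transf M T \<longleftrightarrow>
     (\<forall>A\<in>sets M. emeasure M (T -` A \<inter> space M) = 0 \<longleftrightarrow> emeasure M A = 0)"

definition conservative_transf :: "'a measure \<Rightarrow> ('a \<Rightarrow> 'a) \<Rightarrow> bool" where
  "conservative_transf M T \<longleftrightarrow>
     (\<forall>W\<in>sets M. (\<forall>n::nat. n \<ge> 1 \<longrightarrow> (T ^^ n) ` W \<inter> W = {}) \<longrightarrow> emeasure M W = 0)"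

definition rank_one :: "'a measure \<Rightarrow> ('a \<Rightarrow> 'a) \<Rightarrow> bool" where
  "rank_one N R \<longleftrightarrow>
     (\<exists>(B::nat \<Rightarrow> 'a set) (h::nat \<Rightarrow> nat).
        (\<forall>n. B n \<in> sets N) \<and>
        (\<forall>n i j. i < h n \<longrightarrow> j < h n \<longrightarrow> i \<noteq> j \<longrightarrow>
            (R ^^ i) ` B n \<inter> (R ^^ j) ` B n = {}) \<and>
        (\<forall>A\<in>sets N. emeasure N A < \<infinity> \<longrightarrow>
           (\<forall>\<epsilon>::real. \<epsilon> > 0 \<longrightarrow> (\<exists>N0. \<forall>n\<ge>N0. \<exists>J\<subseteq>{..<h n}.
               emeasure N (sym_diff A (\<Union>j\<in>J. (R ^^ j) ` B n)) < ennreal \<epsilon>))))"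

text \<open>Maharam transformation for a given version omega of d(mu o T)/d mu.\<close>
definition maharam :: "('a \<Rightarrow> 'a) \<Rightarrow> ('a \<Rightarrow> real) \<Rightarrow> 'a \<times> real \<Rightarrow> 'a \<times> real" where
  "maharam T \<omega> = (\<lambda>(x, y). (T x, y / \<omega> x))"

end

theory Submission
  imports Defs
begin


lemma scale_lborel:
  fixes c :: real
  assumes S: "S \<in> sets borel" and c: "c > 0"
  shows "emeasure lborel {y. y*c \<in> S} = emeasure lborel S * ennreal (1/c)"
proof -
  have "emeasure (distr lborel borel ((*) c)) S = emeasure (density lborel (\<lambda>_. ennreal (inverse \<bar>c\<bar>))) S"
    using lborel_distr_mult[of c] c by simp
  also have "\<dots> = (\<integral>\<^sup>+x\<in>S. ennreal (inverse c) \<partial>lborel)"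
    using S c by (simp add: emeasure_density)
  also have "\<dots> = ennreal (inverse c) * emeasure lborel S"
    using S by (simp add: nn_integral_cmult_indicator)
  finally have "emeasure lborel ((*) c -` S) = ennreal (inverse c) * emeasure lborel S"
    using S by (simp add: emeasure_distr)
  moreover have "{y. y*c \<in> S} = (*) c -` S" by (auto simp: mult.commute)
  ultimately show ?thesis by (simp add: mult.commute divide_inverse)
qed

lemma scale_L:
  fixes c :: real
  assumes S: "S \<in> sets (restrict_space lborel {0<..})" and c: "c > 0"
  shows "emeasure (restrict_space lborel {0<..}) {y. y*c \<in> S} = emeasure (restrict_space lborel {0<..}) S * ennreal (1/c)"
proof -
  have Sb: "S \<in> sets borel" "S \<subseteq> {0<..}" using S by (auto simp: sets_restrict_space_iff)
  have sub: "{y. y*c \<in> S} \<subseteq> {0<..}" using Sb c by (auto simp: zero_less_mult_iff)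
  have "emeasure (restrict_space lborel {0<..}) {y. y*c \<in> S} = emeasure lborel {y. y*c \<in> S}"
    by (rule emeasure_restrict_space) (use sub in auto)
  also have "\<dots> = emeasure lborel S * ennreal (1/c)" by (rule scale_lborel[OF Sb(1) c])
  also have "emeasure lborel S = emeasure (restrict_space lborel {0<..}) S"
    by (rule emeasure_restrict_space[symmetric]) (use Sb in auto)
  finally show ?thesis .
qed

lemma sf_L: "sigma_finite_measure (restrict_space lborel ({0<..}::real set))"
  by (rule sigma_finite_measure_restrict_space) (auto simp: lborel.sigma_finite_measure_axioms)




locale MS =
  fixes M :: "'a measure" and T :: "'a \<Rightarrow> 'a" and \<omega> :: "'a \<Rightarrow> real"
  assumes sfM: "sigma_finite_measure M"
    and inv: "invertible_transf M T"
    and om: "\<omega> \<in> borel_measurable M"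
    and pos: "\<forall>x\<in>space M. \<omega> x > 0"
    and rn: "\<forall>A\<in>sets M. emeasure M (T ` A) = (\<integral>\<^sup>+ x \<in> A. ennreal (\<omega> x) \<partial>M)"
begin

abbreviation "L \<equiv> restrict_space lborel ({0<..}::real set)"
abbreviation "N \<equiv> M \<Otimes>\<^sub>M L"
definition "V = the_inv_into (space M) T"
definition "U = (\<lambda>(x,y). (V x, y * \<omega> (V x)))"

lemma bij: "bij_betw T (space M) (space M)" and Tm: "T \<in> measurable M M" and Vm: "V \<in> measurable M M"
  using inv by (auto simp: invertible_transf_def V_def)

lemma V_in: "x \<in> space M \<Longrightarrow> V x \<in> space M"
  by (rule measurable_space[OF Vm])
lemma T_in: "x \<in> space M \<Longrightarrow> T x \<in> space M"
  by (rule measurable_space[OF Tm])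
lemma TV: "x \<in> space M \<Longrightarrow> T (V x) = x"
  using bij unfolding V_def by (metis bij_betw_def f_the_inv_into_f)
lemma VT: "x \<in> space M \<Longrightarrow> V (T x) = x"
  using bij unfolding V_def by (metis bij_betw_def the_inv_into_f_f)

lemma space_N: "space N = space M \<times> {0<..}"
  by (simp add: space_pair_measure)

lemma distr_V: "distr M M V = density M (\<lambda>x. ennreal (\<omega> x))"
proof (rule measure_eqI)
  show "sets (distr M M V) = sets (density M (\<lambda>x. ennreal (\<omega> x)))" by simp
  fix A assume A: "A \<in> sets (distr M M V)"
  hence A': "A \<in> sets M" by simp
  have "V -` A \<inter> space M = T ` A"
  proof
    show "V -` A \<inter> space M \<subseteq> T ` A"
      using TV by (auto intro!: image_eqI[of _ T "V _"])
    show "T ` A \<subseteq> V -` A \<inter> space M"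
      using VT T_in sets.sets_into_space[OF A'] by auto
  qed
  thus "emeasure (distr M M V) A = emeasure (density M (\<lambda>x. ennreal (\<omega> x))) A"
    using A' rn om by (simp add: emeasure_distr[OF Vm] emeasure_density)
qed

lemma Um: "U \<in> measurable N N"
proof -
  have "(\<lambda>p. V (fst p)) \<in> measurable N M" using Vm by measurable
  moreover have "(\<lambda>p. snd p * \<omega> (V (fst p))) \<in> measurable N L"
  proof (rule measurable_restrict_space2)
    show "(\<lambda>p. snd p * \<omega> (V (fst p))) \<in> space N \<rightarrow> {0<..}"
      using pos V_in by (auto simp: space_N)
    have "snd \<in> measurable N borel"
      by (rule measurable_compose[OF measurable_snd]) (simp add: measurable_restrict_space1)
    moreover have "(\<lambda>p. \<omega> (V (fst p))) \<in> measurable N borel"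
      using Vm om by measurable
    ultimately show "(\<lambda>p. snd p * \<omega> (V (fst p))) \<in> measurable N lborel"
      using borel_measurable_times by simp
  qed
  ultimately show ?thesis unfolding U_def
    by (simp add: split_beta' measurable_Pair)
qed

abbreviation "R \<equiv> maharam T \<omega>"

lemma R_simp: "R (x, y) = (T x, y / \<omega> x)" by (simp add: maharam_def)

lemma R_img: assumes "Z \<subseteq> space N" shows "R ` Z = U -` Z \<inter> space N"
proof
  show "R ` Z \<subseteq> U -` Z \<inter> space N"
  proof
    fix q assume "q \<in> R ` Z"
    then obtain x z where xz: "(x,z) \<in> Z" "q = R (x,z)" by auto
    with assms have x: "x \<in> space M" and z: "z > 0" by (auto simp: space_N)
    have wx: "\<omega> x > 0" using x pos by auto
    have "U q = (x, z)" using xz x wx by (simp add: R_simp U_def VT)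
    moreover have "q \<in> space N" using xz x z pos T_in by (simp add: R_simp space_N)
    ultimately show "q \<in> U -` Z \<inter> space N" using xz by simp
  qed
  show "U -` Z \<inter> space N \<subseteq> R ` Z"
  proof
    fix q assume q: "q \<in> U -` Z \<inter> space N"
    obtain x y where qq: "q = (x,y)" by (cases q)
    with q have x: "x \<in> space M" by (auto simp: space_N)
    have "\<omega> (V x) > 0" using x pos V_in by auto
    hence "R (U q) = q" using qq x by (simp add: U_def R_simp TV)
    moreover have "U q \<in> Z" using q by simp
    ultimately show "q \<in> R ` Z" by (intro image_eqI[of q R "U q"]) simp_all
  qed
qed

lemma R_space: "R ` space N \<subseteq> space N"
proof -
  have "R ` space N = U -` space N \<inter> space N" by (rule R_img) (rule order.refl)
  thus ?thesis by (simp only: Int_lower2)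
qed

lemma R_inj: "inj_on R (space N)"
proof
  fix p q assume p: "p \<in> space N" and q: "q \<in> space N" and e: "R p = R q"
  obtain x y x' y' where pq: "p = (x,y)" "q = (x',y')" by (cases p, cases q)
  have x: "x \<in> space M" "x' \<in> space M" using p q pq by (auto simp: space_N)
  have e2: "R (x,y) = R (x',y')" using e unfolding pq .
  hence e3: "(T x, y / \<omega> x) = (T x', y' / \<omega> x')" by (simp only: R_simp)
  hence "T x = T x'" by (rule Pair_inject)
  hence "V (T x) = V (T x')" by (rule arg_cong)
  hence xx: "x = x'" by (simp only: VT[OF x(1)] VT[OF x(2)])
  have "y / \<omega> x = y' / \<omega> x'" using e3 by (rule Pair_inject)
  hence "y / \<omega> x = y' / \<omega> x" by (simp only: xx)
  moreover have "\<omega> x > 0" using pos x(1) by simp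
  ultimately have "y = y'" by simp
  thus "p = q" using pq xx by simp
qed

lemma R_sets: assumes Z: "Z \<in> sets N" shows "R ` Z \<in> sets N"
proof -
  have "U -` Z \<inter> space N \<in> sets N" using Um Z by (rule measurable_sets)
  thus ?thesis using R_img[OF sets.sets_into_space[OF Z]] by simp
qed

lemma R_emeasure: assumes Z: "Z \<in> sets N" shows "emeasure N (R ` Z) = emeasure N Z"
proof -
  interpret Ls: sigma_finite_measure L by (rule sf_L)
  define F where "F x = emeasure L (Pair x -` Z)" for x
  have Fm: "F \<in> borel_measurable M" unfolding F_def using Ls.measurable_emeasure_Pair[OF Z] .
  define G where "G x = F x * ennreal (1 / \<omega> x)" for x
  have Gm: "G \<in> borel_measurable M" unfolding G_def using Fm om by measurable
  have Zs: "Z \<subseteq> space N" using sets.sets_into_space[OF Z] .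
  have RZ: "R ` Z \<in> sets N" using R_sets[OF Z] .
  have "emeasure N (R ` Z) = (\<integral>\<^sup>+x. emeasure L (Pair x -` (R ` Z)) \<partial>M)"
    using Ls.emeasure_pair_measure_alt[OF RZ] .
  also have "\<dots> = (\<integral>\<^sup>+x. G (V x) \<partial>M)"
  proof (rule nn_integral_cong)
    fix x assume x: "x \<in> space M"
    have Vx: "V x \<in> space M" "\<omega> (V x) > 0" using V_in x pos by auto
    have Sm: "Pair (V x) -` Z \<in> sets L" using Z by (rule sets_Pair1)
    have Ssub: "Pair (V x) -` Z \<subseteq> {0<..}" using Zs by (auto simp: space_N)
    have "Pair x -` (R ` Z) = {y. y * \<omega> (V x) \<in> Pair (V x) -` Z}"
    proof -
      have "Pair x -` (R ` Z) = Pair x -` (U -` Z \<inter> space N)" using R_img[OF Zs] by simp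
      also have "\<dots> = {y. y * \<omega> (V x) \<in> Pair (V x) -` Z}"
      proof (intro set_eqI iffI)
        fix y assume "y \<in> Pair x -` (U -` Z \<inter> space N)"
        thus "y \<in> {y. y * \<omega> (V x) \<in> Pair (V x) -` Z}" by (simp add: U_def)
      next
        fix y assume y: "y \<in> {y. y * \<omega> (V x) \<in> Pair (V x) -` Z}"
        hence "y * \<omega> (V x) > 0" using Ssub by auto
        hence "y > 0" using Vx by (simp add: zero_less_mult_iff)
        thus "y \<in> Pair x -` (U -` Z \<inter> space N)" using y x by (simp add: U_def space_N)
      qed
      finally show ?thesis .
    qed
    thus "emeasure L (Pair x -` (R ` Z)) = G (V x)"
      using scale_L[OF Sm Vx(2)] by (simp add: G_def F_def)
  qed
  also have "\<dots> = (\<integral>\<^sup>+x. G x \<partial>(distr M M V))"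
  proof -
    have "G \<in> borel_measurable (distr M M V)"
      using Gm measurable_cong_sets[of "distr M M V" M borel borel] by simp
    thus ?thesis by (rule nn_integral_distr[OF Vm, symmetric])
  qed
  also have "\<dots> = (\<integral>\<^sup>+x. ennreal (\<omega> x) * G x \<partial>M)"
    unfolding distr_V by (rule nn_integral_density) (use Gm om in auto)
  also have "\<dots> = (\<integral>\<^sup>+x. F x \<partial>M)"
  proof (rule nn_integral_cong)
    fix x assume "x \<in> space M"
    hence "\<omega> x > 0" using pos by auto
    hence "ennreal (\<omega> x) * ennreal (1 / \<omega> x) = 1"
      by (simp flip: ennreal_mult)
    moreover have "ennreal (\<omega> x) * G x = F x * (ennreal (\<omega> x) * ennreal (1 / \<omega> x))"
      unfolding G_def by (simp only: ac_simps)
    ultimately show "ennreal (\<omega> x) * G x = F x" by simp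
  qed
  also have "\<dots> = emeasure N Z" unfolding F_def using Ls.emeasure_pair_measure_alt[OF Z] by simp
  finally show ?thesis .
qed

definition "P = (\<lambda>(x::'a, y::real). (x, y / 2))"
definition "D = (\<lambda>(x::'a, y::real). (x, y * 2))"

lemma P_simp: "P (x,y) = (x, y/2)" by (simp add: P_def)

lemma P_inj: "inj P"
proof (rule injI)
  fix p q :: "'a \<times> real" assume "P p = P q"
  thus "p = q" by (cases p, cases q) (simp add: P_simp)
qed

lemma Dm: "D \<in> measurable N N"
proof -
  have "(\<lambda>p. snd p * 2) \<in> measurable N L"
  proof (rule measurable_restrict_space2)
    show "(\<lambda>p. snd p * 2) \<in> space N \<rightarrow> {0<..}" by (auto simp: space_N)
    have "snd \<in> measurable N borel"
      by (rule measurable_compose[OF measurable_snd]) (simp add: measurable_restrict_space1)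
    thus "(\<lambda>p. snd p * 2) \<in> measurable N lborel" using borel_measurable_times by simp
  qed
  thus ?thesis unfolding D_def by (simp add: split_beta' measurable_Pair)
qed

lemma P_img: assumes "Z \<subseteq> space N" shows "P ` Z = D -` Z \<inter> space N"
proof
  show "P ` Z \<subseteq> D -` Z \<inter> space N"
    using assms by (auto simp: P_def D_def space_N)
  show "D -` Z \<inter> space N \<subseteq> P ` Z"
  proof
    fix q assume q: "q \<in> D -` Z \<inter> space N"
    obtain x y where qq: "q = (x,y)" by (cases q)
    have "P (D q) = q" using qq by (simp add: P_def D_def)
    moreover have "D q \<in> Z" using q by simp
    ultimately show "q \<in> P ` Z" by (intro image_eqI[of q P "D q"]) simp_all
  qed
qed

lemma P_sets: assumes Z: "Z \<in> sets N" shows "P ` Z \<in> sets N"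
proof -
  have "D -` Z \<inter> space N \<in> sets N" using Dm Z by (rule measurable_sets)
  thus ?thesis using P_img[OF sets.sets_into_space[OF Z]] by simp
qed

lemma P_emeasure: assumes Z: "Z \<in> sets N" shows "emeasure N (P ` Z) = emeasure N Z * ennreal (1/2)"
proof -
  interpret Ls: sigma_finite_measure L by (rule sf_L)
  define F where "F x = emeasure L (Pair x -` Z)" for x
  have Fm: "F \<in> borel_measurable M" unfolding F_def using Ls.measurable_emeasure_Pair[OF Z] .
  have Zs: "Z \<subseteq> space N" using sets.sets_into_space[OF Z] .
  have PZ: "P ` Z \<in> sets N" using P_sets[OF Z] .
  have "emeasure N (P ` Z) = (\<integral>\<^sup>+x. emeasure L (Pair x -` (P ` Z)) \<partial>M)"
    using Ls.emeasure_pair_measure_alt[OF PZ] .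
  also have "\<dots> = (\<integral>\<^sup>+x. F x * ennreal (1/2) \<partial>M)"
  proof (rule nn_integral_cong)
    fix x assume x: "x \<in> space M"
    have Sm: "Pair x -` Z \<in> sets L" using Z by (rule sets_Pair1)
    have Ssub: "Pair x -` Z \<subseteq> {0<..}" using Zs by (auto simp: space_N)
    have "Pair x -` (P ` Z) = {y. y * 2 \<in> Pair x -` Z}"
    proof -
      have "Pair x -` (P ` Z) = Pair x -` (D -` Z \<inter> space N)" using P_img[OF Zs] by simp
      also have "\<dots> = {y. y * 2 \<in> Pair x -` Z}"
      proof (intro set_eqI iffI)
        fix y assume "y \<in> Pair x -` (D -` Z \<inter> space N)"
        thus "y \<in> {y. y * 2 \<in> Pair x -` Z}" by (simp add: D_def)
      next
        fix y assume y: "y \<in> {y. y * 2 \<in> Pair x -` Z}"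
        hence "y * 2 > 0" using Ssub by auto
        hence "y > 0" by simp
        thus "y \<in> Pair x -` (D -` Z \<inter> space N)" using y x by (simp add: D_def space_N)
      qed
      finally show ?thesis .
    qed
    thus "emeasure L (Pair x -` (P ` Z)) = F x * ennreal (1/2)"
      using scale_L[OF Sm, of 2] by (simp add: F_def)
  qed
  also have "\<dots> = (\<integral>\<^sup>+x. F x \<partial>M) * ennreal (1/2)"
    using Fm by (rule nn_integral_multc)
  also have "(\<integral>\<^sup>+x. F x \<partial>M) = emeasure N Z" unfolding F_def using Ls.emeasure_pair_measure_alt[OF Z] by simp
  finally show ?thesis .
qed

lemma RP: "R (P p) = P (R p)"
  by (cases p) (simp add: R_simp P_simp)

lemma RnP: "(R ^^ n) (P p) = P ((R ^^ n) p)"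
  by (induction n) (simp_all add: RP)

lemma RnP_img: "P ` ((R ^^ n) ` Z) = (R ^^ n) ` (P ` Z)"
  by (simp add: image_image RnP)

lemma Rn_space: "(R ^^ n) ` space N \<subseteq> space N"
proof (induction n)
  case (Suc n)
  have "(R ^^ Suc n) ` space N = R ` ((R ^^ n) ` space N)" by (simp add: image_comp)
  also have "\<dots> \<subseteq> R ` space N" using Suc by (rule image_mono)
  finally show ?case using R_space by blast
qed simp

lemma Rn_inj: "inj_on (R ^^ n) (space N)"
proof (induction n)
  case (Suc n)
  have "inj_on (R \<circ> (R ^^ n)) (space N)"
    using Suc R_inj Rn_space[of n] by (intro comp_inj_on) (auto intro: inj_on_subset)
  thus ?case by (simp add: comp_def)
qed simp

lemma Rn_Suc: "(R ^^ Suc n) ` Z = R ` ((R ^^ n) ` Z)"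
  by (simp add: image_comp)

lemma Rn_sets: "Z \<in> sets N \<Longrightarrow> (R ^^ n) ` Z \<in> sets N"
proof (induction n)
  case (Suc n) thus ?case unfolding Rn_Suc by (intro R_sets)
qed simp

lemma Rn_emeasure: "Z \<in> sets N \<Longrightarrow> emeasure N ((R ^^ n) ` Z) = emeasure N Z"
proof (induction n)
  case (Suc n) thus ?case unfolding Rn_Suc using R_emeasure Rn_sets by metis
qed simp

lemma Rn_Int: "X \<subseteq> space N \<Longrightarrow> Y \<subseteq> space N \<Longrightarrow> (R ^^ n) ` (X \<inter> Y) = (R ^^ n) ` X \<inter> (R ^^ n) ` Y"
  using Rn_inj[of n] by (simp add: inj_on_image_Int)

lemma Rn_add: "(R ^^ a) ` ((R ^^ b) ` X) = (R ^^ (a + b)) ` X"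
  by (simp add: image_comp funpow_add)

lemma main_contra:
  assumes A: "A \<in> sets N" "0 < emeasure N A" "emeasure N A < \<infinity>"
    and ro: "rank_one N R"
  shows False
proof -
  obtain B :: "nat \<Rightarrow> ('a \<times> real) set" and h where
    Bs': "\<forall>n. B n \<in> sets N" and
    disj': "\<forall>n i j. i < h n \<longrightarrow> j < h n \<longrightarrow> i \<noteq> j \<longrightarrow> (R ^^ i) ` B n \<inter> (R ^^ j) ` B n = {}" and
    app': "\<forall>A'\<in>sets N. emeasure N A' < \<infinity> \<longrightarrow> (\<forall>\<epsilon>::real. \<epsilon> > 0 \<longrightarrow> (\<exists>N0. \<forall>n\<ge>N0. \<exists>J\<subseteq>{..<h n}.
               emeasure N (sym_diff A' (\<Union>j\<in>J. (R ^^ j) ` B n)) < ennreal \<epsilon>))"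
    using ro unfolding rank_one_def by (elim exE conjE) 
  have Bs: "\<And>n. B n \<in> sets N" using Bs' by simp
  have disj: "\<And>n i j. i < h n \<Longrightarrow> j < h n \<Longrightarrow> i \<noteq> j \<Longrightarrow> (R ^^ i) ` B n \<inter> (R ^^ j) ` B n = {}"
    using disj' by simp
  have app: "\<And>A' \<epsilon>. A' \<in> sets N \<Longrightarrow> emeasure N A' < \<infinity> \<Longrightarrow> \<epsilon> > 0 \<Longrightarrow> (\<exists>N0. \<forall>n\<ge>N0. \<exists>J\<subseteq>{..<h n}.
               emeasure N (sym_diff A' (\<Union>j\<in>J. (R ^^ j) ` B n)) < ennreal \<epsilon>)"
    using app' by simp
  define A2 where "A2 = P ` A"
  have A2s: "A2 \<in> sets N" unfolding A2_def using P_sets[OF A(1)] .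
  have A2m: "emeasure N A2 = emeasure N A * ennreal (1/2)" unfolding A2_def using P_emeasure[OF A(1)] .
  have half: "ennreal (1/2) < top" by (rule ennreal_less_top)
  have A2fin: "emeasure N A2 < \<infinity>" unfolding A2m using A(3) half by (simp only: infinity_ennreal_def ennreal_mult_less_top) simp
  have "(0::real) < 1/2" by simp
  hence half_pos: "0 < ennreal (1/2)" by (simp only: ennreal_less_zero_iff)
  have A2pos: "0 < emeasure N A2" unfolding A2m ennreal_zero_less_mult_iff using A(2) half_pos by (rule conjI)
  define ar where "ar = enn2real (emeasure N A2)"
  have ar: "emeasure N A2 = ennreal ar" "ar > 0"
    using A2fin A2pos unfolding ar_def by (auto simp: enn2real_positive_iff less_top[symmetric] ennreal_enn2real_if)
  define \<epsilon> where "\<epsilon> = ar / 8"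
  have \<epsilon>: "\<epsilon> > 0" using ar unfolding \<epsilon>_def by simp
  obtain N1 where N1: "\<And>n. n \<ge> N1 \<Longrightarrow> \<exists>J\<subseteq>{..<h n}. emeasure N (sym_diff A (\<Union>j\<in>J. (R ^^ j) ` B n)) < ennreal \<epsilon>"
    using app[OF A(1) A(3) \<epsilon>] by blast
  obtain N2 where N2: "\<And>n. n \<ge> N2 \<Longrightarrow> \<exists>J\<subseteq>{..<h n}. emeasure N (sym_diff A2 (\<Union>j\<in>J. (R ^^ j) ` B n)) < ennreal \<epsilon>"
    using app[OF A2s A2fin \<epsilon>] by blast
  define n where "n = max N1 N2"
  obtain J where J: "J \<subseteq> {..<h n}" "emeasure N (sym_diff A (\<Union>j\<in>J. (R ^^ j) ` B n)) < ennreal \<epsilon>"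
    using N1[of n] unfolding n_def by auto
  obtain J2 where J2: "J2 \<subseteq> {..<h n}" "emeasure N (sym_diff A2 (\<Union>j\<in>J2. (R ^^ j) ` B n)) < ennreal \<epsilon>"
    using N2[of n] unfolding n_def by auto
  define b where "b = B n"
  define K where "K = h n"
  define lev where "lev i = (R ^^ i) ` b" for i
  define E where "E = (\<Union>j\<in>J. lev j)"
  define E2 where "E2 = (\<Union>j\<in>J2. lev j)"
  have bs: "b \<in> sets N" unfolding b_def by (rule Bs)
  have bsp: "b \<subseteq> space N" using sets.sets_into_space[OF bs] .
  have levs: "lev i \<in> sets N" for i unfolding lev_def by (rule Rn_sets[OF bs])
  have levsp: "lev i \<subseteq> space N" for i using sets.sets_into_space[OF levs] .
  have levm: "emeasure N (lev i) = emeasure N b" for i unfolding lev_def by (rule Rn_emeasure[OF bs])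
  have ldisj: "i < K \<Longrightarrow> j < K \<Longrightarrow> i \<noteq> j \<Longrightarrow> lev i \<inter> lev j = {}" for i j
    unfolding lev_def K_def b_def by (rule disj)
  have finJ: "finite J" "finite J2" using J(1) J2(1) by (auto intro: finite_subset)
  have JK: "j \<in> J \<Longrightarrow> j < K" "j \<in> J2 \<Longrightarrow> j < K" for j using J(1) J2(1) unfolding K_def by auto
  have Es: "E \<in> sets N" "E2 \<in> sets N" unfolding E_def E2_def using finJ levs by auto
  have E2m: "emeasure N E2 = of_nat (card J2) * emeasure N b"
  proof -
    have "emeasure N E2 = (\<Sum>i\<in>J2. emeasure N (lev i))"
      unfolding E2_def
    proof (rule sum_emeasure[symmetric])
      show "lev ` J2 \<subseteq> sets N" using levs by auto
      show "disjoint_family_on lev J2" unfolding disjoint_family_on_def using ldisj JK by auto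
      show "finite J2" by (rule finJ)
    qed
    thus ?thesis by (simp add: levm)
  qed
  have E2le: "emeasure N E2 \<le> ennreal ar + ennreal \<epsilon>"
  proof -
    have "E2 \<subseteq> A2 \<union> sym_diff A2 E2" by auto
    hence "emeasure N E2 \<le> emeasure N (A2 \<union> sym_diff A2 E2)"
      using A2s Es by (intro emeasure_mono) auto
    also have "\<dots> \<le> emeasure N A2 + emeasure N (sym_diff A2 E2)"
      using A2s Es by (intro emeasure_subadditive) auto
    also have "\<dots> \<le> ennreal ar + ennreal \<epsilon>"
      using J2(2) ar(1) unfolding E2_def lev_def b_def by (intro add_mono) auto
    finally show ?thesis .
  qed
  define Pb where "Pb = P ` b"
  have Pbs: "Pb \<in> sets N" unfolding Pb_def by (rule P_sets[OF bs])
  have Pbsp: "Pb \<subseteq> space N" using sets.sets_into_space[OF Pbs] .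
  have Pbm: "emeasure N Pb = emeasure N b * ennreal (1/2)" unfolding Pb_def by (rule P_emeasure[OF bs])
  have PE: "P ` E = (\<Union>j\<in>J. (R ^^ j) ` Pb)"
    unfolding E_def lev_def Pb_def by (simp add: image_UN RnP_img)
  have PEs: "P ` E \<in> sets N" using P_sets[OF Es(1)] .
  have RPbs: "(R ^^ j) ` Pb \<in> sets N" for j by (rule Rn_sets[OF Pbs])
  have RPbsp: "(R ^^ j) ` Pb \<subseteq> space N" for j using sets.sets_into_space[OF RPbs] .
  have key: "emeasure N (lev i \<inter> P ` E) \<le> emeasure N Pb" if i: "i \<in> J2" for i
  proof -
    have eqU: "lev i \<inter> P ` E = (\<Union>j\<in>J. lev i \<inter> (R ^^ j) ` Pb)" unfolding PE by auto
    have "emeasure N (lev i \<inter> P ` E) = emeasure N (\<Union>j\<in>J. lev i \<inter> (R ^^ j) ` Pb)" by (simp only: eqU)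
    also have "\<dots> \<le> (\<Sum>j\<in>J. emeasure N (lev i \<inter> (R ^^ j) ` Pb))"
      by (rule emeasure_subadditive_finite[OF finJ(1)]) (use levs RPbs in auto)
    also have "\<dots> = (\<Sum>j\<in>J. emeasure N (lev (Suc i + (K - 1 - j)) \<inter> (R ^^ K) ` Pb))"
    proof (rule sum.cong[OF refl])
      fix j assume j: "j \<in> J"
      have jK: "j < K" using JK j by simp
      have ex: "K - j + i = Suc i + (K - 1 - j)" using jK by arith
      have "emeasure N (lev i \<inter> (R ^^ j) ` Pb) = emeasure N ((R ^^ (K - j)) ` (lev i \<inter> (R ^^ j) ` Pb))"
        using levs RPbs by (simp add: Rn_emeasure sets.Int)
      also have "(R ^^ (K - j)) ` (lev i \<inter> (R ^^ j) ` Pb) = (R ^^ (K - j)) ` lev i \<inter> (R ^^ (K - j)) ` ((R ^^ j) ` Pb)"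
        using levsp RPbsp by (rule Rn_Int)
      also have "(R ^^ (K - j)) ` lev i = lev (Suc i + (K - 1 - j))"
        unfolding lev_def Rn_add ex by (rule refl)
      also have "(R ^^ (K - j)) ` ((R ^^ j) ` Pb) = (R ^^ K) ` Pb"
        unfolding Rn_add using jK by simp
      finally show "emeasure N (lev i \<inter> (R ^^ j) ` Pb) = emeasure N (lev (Suc i + (K - 1 - j)) \<inter> (R ^^ K) ` Pb)" .
    qed
    also have "\<dots> = emeasure N (\<Union>j\<in>J. lev (Suc i + (K - 1 - j)) \<inter> (R ^^ K) ` Pb)"
    proof (rule sum_emeasure)
      show "(\<lambda>j. lev (Suc i + (K - 1 - j)) \<inter> (R ^^ K) ` Pb) ` J \<subseteq> sets N"
        using levs RPbs by (auto simp: sets.Int)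
      show "finite J" by (rule finJ)
      show "disjoint_family_on (\<lambda>j. lev (Suc i + (K - 1 - j)) \<inter> (R ^^ K) ` Pb) J"
        unfolding disjoint_family_on_def
      proof (intro ballI impI)
        fix j j' assume j: "j \<in> J" "j' \<in> J" "j \<noteq> j'"
        have jK: "j < K" "j' < K" using JK j by auto
        have "lev (Suc i + (K - 1 - j)) \<inter> lev (Suc i + (K - 1 - j')) = (R ^^ Suc i) ` (lev (K - 1 - j) \<inter> lev (K - 1 - j'))"
          unfolding lev_def Rn_add[symmetric] using Rn_Int[of "(R ^^ (K - 1 - j)) ` b" "(R ^^ (K - 1 - j')) ` b" "Suc i"]
            levsp unfolding lev_def by simp
        also have "lev (K - 1 - j) \<inter> lev (K - 1 - j') = {}"
          using jK j(3) by (intro ldisj) auto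
        finally show "(lev (Suc i + (K - 1 - j)) \<inter> (R ^^ K) ` Pb) \<inter> (lev (Suc i + (K - 1 - j')) \<inter> (R ^^ K) ` Pb) = {}"
          by auto
      qed
    qed
    also have "\<dots> \<le> emeasure N ((R ^^ K) ` Pb)"
      using RPbs by (intro emeasure_mono) auto
    also have "\<dots> = emeasure N Pb" by (rule Rn_emeasure[OF Pbs])
    finally show ?thesis .
  qed
  have upper: "emeasure N (P ` E \<inter> E2) \<le> of_nat (card J2) * emeasure N Pb"
  proof -
    have eqU: "P ` E \<inter> E2 = (\<Union>i\<in>J2. lev i \<inter> P ` E)" unfolding E2_def by auto
    have "emeasure N (P ` E \<inter> E2) = emeasure N (\<Union>i\<in>J2. lev i \<inter> P ` E)" by (simp only: eqU)
    also have "\<dots> \<le> (\<Sum>i\<in>J2. emeasure N (lev i \<inter> P ` E))"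
      by (rule emeasure_subadditive_finite[OF finJ(2)]) (use levs PEs in auto)
    also have "\<dots> \<le> (\<Sum>i\<in>J2. emeasure N Pb)" by (intro sum_mono key)
    also have "\<dots> = of_nat (card J2) * emeasure N Pb" by simp
    finally show ?thesis .
  qed
  have lower: "emeasure N A2 \<le> emeasure N (P ` E \<inter> E2) + ennreal \<epsilon> + ennreal \<epsilon>"
  proof -
    have cover: "A2 \<subseteq> (P ` E \<inter> E2) \<union> (A2 - P ` E) \<union> (A2 - E2)" by auto
    have s1: "A2 - P ` E \<in> sets N" "A2 - E2 \<in> sets N" "P ` E \<inter> E2 \<in> sets N"
      using A2s PEs Es by auto
    have "emeasure N A2 \<le> emeasure N ((P ` E \<inter> E2) \<union> (A2 - P ` E) \<union> (A2 - E2))"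
      using s1 cover by (intro emeasure_mono) auto
    also have "\<dots> \<le> emeasure N ((P ` E \<inter> E2) \<union> (A2 - P ` E)) + emeasure N (A2 - E2)"
      using s1 by (intro emeasure_subadditive) auto
    also have "emeasure N ((P ` E \<inter> E2) \<union> (A2 - P ` E)) \<le> emeasure N (P ` E \<inter> E2) + emeasure N (A2 - P ` E)"
      using s1 by (intro emeasure_subadditive) auto
    also have "emeasure N (A2 - P ` E) \<le> ennreal \<epsilon>"
    proof -
      have "A2 - P ` E = P ` (A - E)" unfolding A2_def using P_inj by (simp add: image_set_diff)
      hence "emeasure N (A2 - P ` E) = emeasure N (A - E) * ennreal (1/2)"
        using P_emeasure[of "A - E"] A(1) Es by auto
      also have "\<dots> \<le> emeasure N (A - E) * 1"
      proof (rule mult_left_mono)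
        have "ennreal (1/2) \<le> ennreal 1" by (rule ennreal_leI) simp
        thus "ennreal (1/2) \<le> 1" by (simp only: ennreal_1)
      qed simp
      also have "\<dots> \<le> emeasure N (sym_diff A E)"
        unfolding mult_1_right using A(1) Es by (intro emeasure_mono) auto
      also have "\<dots> \<le> ennreal \<epsilon>"
        using J(2) unfolding E_def lev_def b_def by simp
      finally show ?thesis .
    qed
    also have "emeasure N (A2 - E2) \<le> ennreal \<epsilon>"
    proof -
      have "emeasure N (A2 - E2) \<le> emeasure N (sym_diff A2 E2)"
        using A2s Es by (intro emeasure_mono) auto
      also have "\<dots> \<le> ennreal \<epsilon>"
        using J2(2) unfolding E2_def lev_def b_def by simp
      finally show ?thesis .
    qed
    finally show ?thesis by (simp add: add_mono)
  qed
  have up2: "emeasure N (P ` E \<inter> E2) \<le> of_nat (card J2) * emeasure N b * ennreal (1/2)"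
    using upper unfolding Pbm by (simp only: mult.assoc)
  have "ennreal ar \<le> emeasure N (P ` E \<inter> E2) + ennreal \<epsilon> + ennreal \<epsilon>"
    using lower unfolding ar(1) .
  also have "\<dots> \<le> of_nat (card J2) * emeasure N b * ennreal (1/2) + ennreal \<epsilon> + ennreal \<epsilon>"
    using up2 by (intro add_right_mono)
  also have "of_nat (card J2) * emeasure N b * ennreal (1/2) \<le> (ennreal ar + ennreal \<epsilon>) * ennreal (1/2)"
    using E2le E2m by (intro mult_right_mono) auto
  finally have "ennreal ar \<le> (ennreal ar + ennreal \<epsilon>) * ennreal (1/2) + ennreal \<epsilon> + ennreal \<epsilon>"
    by (simp add: add_mono)
  also have "\<dots> = ennreal ((ar + \<epsilon>) * (1/2) + \<epsilon> + \<epsilon>)"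
  proof -
    have nn: "0 \<le> ar" "0 \<le> \<epsilon>" using ar(2) \<epsilon> by auto
    have e1: "ennreal ((ar + \<epsilon>) * (1/2) + \<epsilon> + \<epsilon>) = ennreal ((ar + \<epsilon>) * (1/2) + \<epsilon>) + ennreal \<epsilon>"
      by (rule ennreal_plus) (use nn in simp_all)
    have e2: "ennreal ((ar + \<epsilon>) * (1/2) + \<epsilon>) = ennreal ((ar + \<epsilon>) * (1/2)) + ennreal \<epsilon>"
      by (rule ennreal_plus) (use nn in simp_all)
    have e3: "ennreal ((ar + \<epsilon>) * (1/2)) = ennreal (ar + \<epsilon>) * ennreal (1/2)"
      by (rule ennreal_mult) (use nn in simp_all)
    have e4: "ennreal (ar + \<epsilon>) = ennreal ar + ennreal \<epsilon>"
      by (rule ennreal_plus) (use nn in simp_all)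
    show ?thesis by (simp only: e1 e2 e3 e4)
  qed
  finally have "ar \<le> (ar + \<epsilon>) * (1/2) + \<epsilon> + \<epsilon>"
    using ar \<epsilon> by (subst (asm) ennreal_le_iff) auto
  thus False using ar(2) unfolding \<epsilon>_def by simp
qed

end

lemma exists_pos_fin:
  assumes "sigma_finite_measure M" "emeasure M (space M) > 0"
  obtains X where "X \<in> sets M" "0 < emeasure M X" "emeasure M X < \<infinity>"
proof -
  interpret sigma_finite_measure M by fact
  obtain A :: "nat \<Rightarrow> 'a set" where A: "range A \<subseteq> sets M" "(\<Union>i. A i) = space M" "\<And>i. emeasure M (A i) \<noteq> \<infinity>"
    by (rule sigma_finite) auto
  show ?thesis
  proof (cases "\<exists>i. emeasure M (A i) \<noteq> 0")
    case True
    then obtain i where i: "emeasure M (A i) \<noteq> 0" by blast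
    show ?thesis
    proof (rule that[of "A i"])
      show "A i \<in> sets M" using A(1) by auto
      show "0 < emeasure M (A i)" using i by (simp add: zero_less_iff_neq_zero)
      show "emeasure M (A i) < \<infinity>" using A(3)[of i] by (simp add: less_top)
    qed
  next
    case False
    hence "emeasure M (\<Union>i. A i) \<le> (\<Sum>i. emeasure M (A i))"
      using A(1) by (intro emeasure_subadditive_countably) 
    also have "\<dots> = 0" using False by simp
    finally have "emeasure M (space M) = 0" using A(2) by simp
    thus ?thesis using assms(2) by simp
  qed
qed

theorem mainTheorem8:
  fixes M :: "'a measure" and T :: "'a \<Rightarrow> 'a" and \<omega> :: "'a \<Rightarrow> real"
  assumes "standard_borel M"
    and "sigma_finite_measure M"
    and "nonatomic M"
    and "emeasure M (space M) > 0"
    and "invertible_transf M T"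
    and "conservative_transf M T"
    and "nonsingular_transf M T"
    and "\<omega> \<in> borel_measurable M"
    and "\<forall>x\<in>space M. \<omega> x > 0"
    and "\<forall>A\<in>sets M. emeasure M (T ` A) = (\<integral>\<^sup>+ x \<in> A. ennreal (\<omega> x) \<partial>M)"
  shows "\<not> rank_one (M \<Otimes>\<^sub>M restrict_space lborel {0<..}) (maharam T \<omega>)"
proof
  assume ro: "rank_one (M \<Otimes>\<^sub>M restrict_space lborel {0<..}) (maharam T \<omega>)"
  interpret MS M T \<omega> by (intro MS.intro assms(2) assms(5) assms(8) assms(9) assms(10))
  interpret Ls: sigma_finite_measure "restrict_space lborel ({0<..}::real set)" by (rule sf_L)
  obtain X where X: "X \<in> sets M" "0 < emeasure M X" "emeasure M X < \<infinity>"
    by (rule exists_pos_fin[OF assms(2) assms(4)]) auto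
  define I where "I = ({0<..1}::real set)"
  have Is: "I \<in> sets (restrict_space lborel {0<..})" unfolding I_def
    by (auto simp: sets_restrict_space_iff)
  have Im: "emeasure (restrict_space lborel {0<..}) I = 1"
  proof -
    have "emeasure (restrict_space lborel {0<..}) I = emeasure lborel I"
      by (rule emeasure_restrict_space) (auto simp: I_def)
    thus ?thesis unfolding I_def by simp
  qed
  have As: "X \<times> I \<in> sets (M \<Otimes>\<^sub>M restrict_space lborel {0<..})" using X(1) Is by simp
  have Am: "emeasure (M \<Otimes>\<^sub>M restrict_space lborel {0<..}) (X \<times> I) = emeasure M X"
    using Ls.emeasure_pair_measure_Times[OF X(1) Is] Im by simp
  show False
    by (rule main_contra[OF As _ _ ro]) (use Am X in simp_all)
qed


end
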